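(* Let $\Delta\in\mathcal{H}_{\ge3}$ be a hypergraph on $[d]$ and let $F=F_\sim\wedge F_{\not\sim}$ be a consistent formula on $[d]$. Then there is a unique hypergraph $\Delta_F$ on the vertex set $[d]/F$ that is minimal (with respect to $\le$) among the hypergraphs $\widetilde\Delta$ on $[d]/F$ satisfying: (1) for every $e\in\Delta$ with $|\{\bar i_F: i\in e\}|\ge3$ there is $e'\in\widetilde\Delta$ with $\{\bar i_F:i\in e\}\subseteq e'$; (2) there is no atom $(c_1\not\sim c_2)$ of $F_{\not\sim}$ and no pair of distinct edges $e_1,e_2\in\widetilde\Delta$ with $\{\bar{c_1}_F,\bar{c_2}_F\}\subseteq e_1\cap e_2$. Moreover $\Delta_F=(\Delta_{F_\sim})_{F_{\not\sim}}$.
   Context: A hypergraph on a finite vertex set $V$ is a collection of subsets of $V$ (edges) none properly contained in another; $\Delta_1\le\Delta_2$ means every edge of $\Delta_1$ is contained in some edge of $\Delta_2$; $\mathcal{H}_{\ge3}$ denotes hypergraphs all of whose edges have size $\ge3$. A formula on $[d]$ is a conjunction of atoms $(x\sim y)$ and $(x\not\sim y)$ with $x\neq y\in[d]$; $F_\sim$ is the conjunction of its $\sim$-atoms and $F_{\not\sim}$ that of its $\not\sim$-atoms. The $\sim$-atoms generate an equivalence relation on $[d]$, with set of classes $[d]/F$ and class $\bar i_F$ of $i$; $F$ is consistent if no atom $(i\not\sim j)$ has $\bar i_F=\bar j_F$. $\Delta_{F_\sim}$ is the hypergraph on $[d]/F$ consisting of the inclusion-maximal sets among $\{\bar i_F:i\in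 e\}$, for $e\in\Delta$ with $|\{\bar i_F:i\in e\}|\ge3$. For a hypergraph $\Gamma$ on $[d]/F$ with edges of size $\ge3$, $\Gamma_{F_{\not\sim}}$ denotes the unique minimal (for $\le$) hypergraph $\Gamma'$ on $[d]/F$ with $\Gamma\le\Gamma'$ such that no atom $(c_1\not\sim c_2)$ of $F_{\not\sim}$ and no two distinct edges $e_1,e_2\in\Gamma'$ satisfy $\{\bar{c_1}_F,\bar{c_2}_F\}\subseteq e_1\cap e_2$ (this exists and is unique). *)

theory Defs
  imports Main
begin

definition hypergraph_on :: "'a set \<Rightarrow> 'a set set \<Rightarrow> bool" where
  "hypergraph_on V H \<longleftrightarrow> (\<forall>e\<in>H. e \<subseteq> V) \<and> (\<forall>e1\<in>H. \<forall>e2\<in>H. \<not> e1 \<subset> e2)"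

definition hyp_le :: "'a set set \<Rightarrow> 'a set set \<Rightarrow> bool" where
  "hyp_le H1 H2 \<longleftrightarrow> (\<forall>e\<in>H1. \<exists>e'\<in>H2. e \<subseteq> e')"

definition H_ge3 :: "'a set set \<Rightarrow> bool" where
  "H_ge3 H \<longleftrightarrow> (\<forall>e\<in>H. card e \<ge> 3)"

text \<open>A formula on [d] is given by its set of \<open>\<sim>\<close>-atoms Fs and its set of
  \<open>\<not>\<sim>\<close>-atoms Fn, each atom being a pair (x,y) with x \<noteq> y in [d].\<close>

definition formula_on :: "nat \<Rightarrow> (nat \<times> nat) set \<Rightarrow> (nat \<times> nat) set \<Rightarrow> bool" where
  "formula_on d Fs Fn \<longleftrightarrow>
     (\<forall>(x,y)\<in>Fs \<union> Fn. x \<noteq> y \<and> x \<in> {1..d} \<and> y \<in> {1..d})"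

definition feq :: "nat \<Rightarrow> (nat \<times> nat) set \<Rightarrow> (nat \<times> nat) set" where
  "feq d Fs = (Fs \<union> Fs\<inverse>)\<^sup>* \<inter> ({1..d} \<times> {1..d})"

definition fclasses :: "nat \<Rightarrow> (nat \<times> nat) set \<Rightarrow> nat set set" where
  "fclasses d Fs = {1..d} // feq d Fs"

definition fcl :: "nat \<Rightarrow> (nat \<times> nat) set \<Rightarrow> nat \<Rightarrow> nat set" where
  "fcl d Fs i = feq d Fs `` {i}"

definition consistent :: "nat \<Rightarrow> (nat \<times> nat) set \<Rightarrow> (nat \<times> nat) set \<Rightarrow> bool" where
  "consistent d Fs Fn \<longleftrightarrow> (\<forall>(i,j)\<in>Fn. fcl d Fs i \<noteq> fcl d Fs j)"

definition maxsets :: "'a set set \<Rightarrow> 'a set set" where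
  "maxsets S = {x\<in>S. \<not> (\<exists>y\<in>S. x \<subset> y)}"

definition Delta_Fsim :: "nat \<Rightarrow> (nat \<times> nat) set \<Rightarrow> nat set set \<Rightarrow> nat set set set" where
  "Delta_Fsim d Fs \<Delta> = maxsets {fcl d Fs ` e | e. e \<in> \<Delta> \<and> card (fcl d Fs ` e) \<ge> 3}"

definition nsim_ok :: "nat \<Rightarrow> (nat \<times> nat) set \<Rightarrow> (nat \<times> nat) set \<Rightarrow> nat set set set \<Rightarrow> bool" where
  "nsim_ok d Fs Fn G \<longleftrightarrow>
     \<not> (\<exists>(c1,c2)\<in>Fn. \<exists>e1\<in>G. \<exists>e2\<in>G. e1 \<noteq> e2 \<and> {fcl d Fs c1, fcl d Fs c2} \<subseteq> e1 \<inter> e2)"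

definition Gamma_Fnsim :: "nat \<Rightarrow> (nat \<times> nat) set \<Rightarrow> (nat \<times> nat) set \<Rightarrow> nat set set set \<Rightarrow> nat set set set" where
  "Gamma_Fnsim d Fs Fn \<Gamma> = (THE G. (hypergraph_on (fclasses d Fs) G \<and> hyp_le \<Gamma> G \<and> nsim_ok d Fs Fn G)
      \<and> (\<forall>G'. hypergraph_on (fclasses d Fs) G' \<and> hyp_le \<Gamma> G' \<and> nsim_ok d Fs Fn G' \<and> hyp_le G' G \<longrightarrow> G' = G))"

definition covers_Delta :: "nat \<Rightarrow> (nat \<times> nat) set \<Rightarrow> nat set set \<Rightarrow> nat set set set \<Rightarrow> bool" where
  "covers_Delta d Fs \<Delta> G \<longleftrightarrow>
     (\<forall>e\<in>\<Delta>. card (fcl d Fs ` e) \<ge> 3 \<longrightarrow> (\<exists>e'\<in>G. fcl d Fs ` e \<subseteq> e'))"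

definition admissible :: "nat \<Rightarrow> (nat \<times> nat) set \<Rightarrow> (nat \<times> nat) set \<Rightarrow> nat set set \<Rightarrow> nat set set set \<Rightarrow> bool" where
  "admissible d Fs Fn \<Delta> G \<longleftrightarrow>
     hypergraph_on (fclasses d Fs) G \<and> covers_Delta d Fs \<Delta> G \<and> nsim_ok d Fs Fn G"

end

theory Submission
  imports Defs
begin

lemma hyp_antisym:
  assumes "hypergraph_on V A" "hypergraph_on V B" "hyp_le A B" "hyp_le B A"
  shows "A = B"
proof -
  have *: "X \<subseteq> Y" if t1: "hypergraph_on V X" and t2: "hyp_le X Y" and t3: "hyp_le Y X" for X Y :: "'a set set"
  proof
    fix e assume e: "e \<in> X"
    then obtain e' where e': "e' \<in> Y" "e \<subseteq> e'" using t2 unfolding hyp_le_def by blast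
    then obtain e'' where e'': "e'' \<in> X" "e' \<subseteq> e''" using t3 unfolding hyp_le_def by blast
    have "\<not> e \<subset> e''" using t1 e e''(1) unfolding hypergraph_on_def by blast
    with e' e'' have "e = e'" by blast
    with e' show "e \<in> Y" by simp
  qed
  show ?thesis using *[of A B] *[of B A] assms by blast
qed

lemma hyp_le_trans: "hyp_le A B \<Longrightarrow> hyp_le B C \<Longrightarrow> hyp_le A C"
  unfolding hyp_le_def by (meson subset_trans)

lemma maxsets_above:
  assumes "finite S" "x \<in> S"
  shows "\<exists>y\<in>maxsets S. x \<subseteq> y"
proof -
  obtain m where m: "m \<in> S" "x \<subseteq> m" "\<forall>b\<in>S. m \<subseteq> b \<longrightarrow> m = b"
    using finite_has_maximal2[OF assms] by blast
  then have "m \<in> maxsets S" unfolding maxsets_def by blast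
  with m show ?thesis by blast
qed

lemma closure_exists:
  fixes H :: "nat set set set"
  shows "finite H \<Longrightarrow> (\<forall>e\<in>H. e \<subseteq> V) \<Longrightarrow> \<exists>H'. hypergraph_on V H' \<and> hyp_le H H' \<and> nsim_ok d Fs Fn H'
        \<and> (\<forall>G. hyp_le H G \<and> nsim_ok d Fs Fn G \<longrightarrow> hyp_le H' G)"
proof (induction "card H" arbitrary: H rule: less_induct)
  case less
  define H0 where "H0 = maxsets H"
  have H0H: "H0 \<subseteq> H" unfolding H0_def maxsets_def by blast
  have fin0: "finite H0" using H0H less.prems(1) finite_subset by blast
  have le0: "hyp_le H H0" unfolding hyp_le_def H0_def using maxsets_above[OF less.prems(1)] by blast
  have le0G: "hyp_le H0 G" if "hyp_le H G" for G using that H0H unfolding hyp_le_def by blast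
  have hyp0: "hypergraph_on V H0" using H0H less.prems(2) unfolding hypergraph_on_def H0_def maxsets_def by blast
  show ?case
  proof (cases "nsim_ok d Fs Fn H0")
    case True
    then show ?thesis using hyp0 le0 le0G by blast
  next
    case False
    have "\<exists>p\<in>Fn. \<exists>e1\<in>H0. \<exists>e2\<in>H0. e1 \<noteq> e2 \<and> {fcl d Fs (fst p), fcl d Fs (snd p)} \<subseteq> e1 \<inter> e2"
      using False unfolding nsim_ok_def by (simp add: case_prod_beta, meson)
    then obtain p e1 e2 where p: "p \<in> Fn" "e1 \<in> H0" "e2 \<in> H0" "e1 \<noteq> e2"
      "{fcl d Fs (fst p), fcl d Fs (snd p)} \<subseteq> e1 \<inter> e2" by blast
    define c1 where "c1 = fst p"
    define c2 where "c2 = snd p"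
    have c: "(c1,c2) \<in> Fn" "e1 \<in> H0" "e2 \<in> H0" "e1 \<noteq> e2"
      "{fcl d Fs c1, fcl d Fs c2} \<subseteq> e1 \<inter> e2" using p unfolding c1_def c2_def by simp_all
    define H1 where "H1 = insert (e1 \<union> e2) (H0 - {e1, e2})"
    have sub2: "{e1,e2} \<subseteq> H0" using c by simp
    have c2: "card {e1,e2} = 2" using c(4) by simp
    have "card (H0 - {e1,e2}) = card H0 - 2" using card_Diff_subset[OF _ sub2] c2 by simp
    moreover have "card H0 \<ge> 2" using card_mono[OF fin0 sub2] c2 by simp
    moreover have "card H1 \<le> Suc (card (H0 - {e1,e2}))" unfolding H1_def
      using card_insert_le_m1 by (simp add: card_insert_if fin0)
    moreover have "card H0 \<le> card H" using H0H less.prems(1) card_mono by blast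
    ultimately have cardlt: "card H1 < card H" by linarith
    have fin1: "finite H1" unfolding H1_def using fin0 by simp
    have "e1 \<union> e2 \<subseteq> V" using H0H less.prems(2) c(2,3) by blast
    hence sub1: "\<forall>e\<in>H1. e \<subseteq> V" unfolding H1_def using H0H less.prems(2) by blast
    obtain H' where H': "hypergraph_on V H'" "hyp_le H1 H'" "nsim_ok d Fs Fn H'"
      "\<forall>G. hyp_le H1 G \<and> nsim_ok d Fs Fn G \<longrightarrow> hyp_le H' G"
      using less.hyps[OF cardlt fin1 sub1] by blast
    have "hyp_le H0 H1" unfolding hyp_le_def
    proof
      fix e assume e: "e \<in> H0"
      show "\<exists>e'\<in>H1. e \<subseteq> e'"
      proof (cases "e = e1 \<or> e = e2")
        case True
        then have "e \<subseteq> e1 \<union> e2" by blast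
        moreover have "e1 \<union> e2 \<in> H1" unfolding H1_def by simp
        ultimately show ?thesis by blast
      next
        case False
        then have "e \<in> H1" using e unfolding H1_def by simp
        then show ?thesis by blast
      qed
    qed
    hence leH1: "hyp_le H H1" using le0 hyp_le_trans by blast
    have "hyp_le H1 G" if G: "hyp_le H G" "nsim_ok d Fs Fn G" for G
    proof -
      have g0: "hyp_le H0 G" using le0G G(1) .
      obtain g1 where g1: "g1 \<in> G" "e1 \<subseteq> g1" using g0 c(2) unfolding hyp_le_def by blast
      obtain g2 where g2: "g2 \<in> G" "e2 \<subseteq> g2" using g0 c(3) unfolding hyp_le_def by blast
      have "g1 = g2"
      proof (rule ccontr)
        assume "g1 \<noteq> g2"
        moreover have "{fcl d Fs c1, fcl d Fs c2} \<subseteq> g1 \<inter> g2" using c(5) g1(2) g2(2) by blast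
        ultimately have "\<exists>x\<in>G. \<exists>y\<in>G. x \<noteq> y \<and> {fcl d Fs c1, fcl d Fs c2} \<subseteq> x \<inter> y"
          using g1(1) g2(1) by blast
        hence "\<exists>(a,b)\<in>Fn. \<exists>x\<in>G. \<exists>y\<in>G. x \<noteq> y \<and> {fcl d Fs a, fcl d Fs b} \<subseteq> x \<inter> y"
          using c(1) by (intro bexI[of _ "(c1,c2)"]) simp_all
        with G(2) show False unfolding nsim_ok_def by (rule notE)
      qed
      hence "e1 \<union> e2 \<subseteq> g1" using g1 g2 by blast
      have "\<forall>e\<in>H0 - {e1,e2}. \<exists>e'\<in>G. e \<subseteq> e'" using g0 unfolding hyp_le_def by blast
      with g1 \<open>e1 \<union> e2 \<subseteq> g1\<close> show ?thesis unfolding hyp_le_def H1_def by blast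
    qed
    then show ?thesis using H' leH1 hyp_le_trans by blast
  qed
qed

lemma fclasses_eq: "fclasses d Fs = fcl d Fs ` {1..d}"
  unfolding fclasses_def fcl_def quotient_def by (simp add: UNION_singleton_eq_range)

lemma covers_iff:
  assumes "hypergraph_on {1..d} \<Delta>"
  shows "finite (Delta_Fsim d Fs \<Delta>)" "\<forall>e\<in>Delta_Fsim d Fs \<Delta>. e \<subseteq> fclasses d Fs"
    "covers_Delta d Fs \<Delta> G \<longleftrightarrow> hyp_le (Delta_Fsim d Fs \<Delta>) G"
proof -
  define S where "S = {fcl d Fs ` e | e. e \<in> \<Delta> \<and> card (fcl d Fs ` e) \<ge> 3}"
  have SV: "\<forall>x\<in>S. x \<subseteq> fclasses d Fs"
  proof
    fix x assume "x \<in> S"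
    then obtain e where x: "x = fcl d Fs ` e" "e \<in> \<Delta>" unfolding S_def by blast
    then have "e \<subseteq> {1..d}" using assms unfolding hypergraph_on_def by blast
    then show "x \<subseteq> fclasses d Fs" unfolding fclasses_eq x(1) by (rule image_mono)
  qed
  have finV: "finite (fclasses d Fs)" unfolding fclasses_eq by simp
  have "S \<subseteq> Pow (fclasses d Fs)" using SV by blast
  then have finS: "finite S" using finite_Pow_iff[THEN iffD2, OF finV] by (rule finite_subset)
  have Geq: "Delta_Fsim d Fs \<Delta> = maxsets S" unfolding S_def Delta_Fsim_def ..
  have GS: "maxsets S \<subseteq> S" unfolding maxsets_def by blast
  show "finite (Delta_Fsim d Fs \<Delta>)" using finite_subset[OF GS finS] Geq by simp
  show "\<forall>e\<in>Delta_Fsim d Fs \<Delta>. e \<subseteq> fclasses d Fs" using Geq GS SV by blast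
  show "covers_Delta d Fs \<Delta> G \<longleftrightarrow> hyp_le (Delta_Fsim d Fs \<Delta>) G"
  proof
    assume cov: "covers_Delta d Fs \<Delta> G"
    show "hyp_le (Delta_Fsim d Fs \<Delta>) G" unfolding hyp_le_def
    proof
      fix x assume "x \<in> Delta_Fsim d Fs \<Delta>"
      then have "x \<in> S" using Geq GS by blast
      then obtain e where x: "x = fcl d Fs ` e" "e \<in> \<Delta>" "card (fcl d Fs ` e) \<ge> 3" unfolding S_def by blast
      then show "\<exists>e'\<in>G. x \<subseteq> e'" using cov unfolding covers_Delta_def by blast
    qed
  next
    assume h: "hyp_le (Delta_Fsim d Fs \<Delta>) G"
    show "covers_Delta d Fs \<Delta> G"
      unfolding covers_Delta_def
    proof (intro ballI impI)
      fix e assume "e \<in> \<Delta>" "3 \<le> card (fcl d Fs ` e)"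
      then have "fcl d Fs ` e \<in> S" unfolding S_def by blast
      then obtain y where y: "y \<in> maxsets S" "fcl d Fs ` e \<subseteq> y" using maxsets_above[OF finS] by blast
      have "y \<in> Delta_Fsim d Fs \<Delta>" using y(1) Geq by simp
      then obtain e' where e': "e' \<in> G" "y \<subseteq> e'" using h unfolding hyp_le_def by blast
      show "\<exists>e'\<in>G. fcl d Fs ` e \<subseteq> e'" using e' y(2) by blast
    qed
  qed
qed

theorem mainTheorem5:
  fixes d :: nat and \<Delta> :: "nat set set" and Fs Fn :: "(nat \<times> nat) set"
  assumes "hypergraph_on {1..d} \<Delta>" and "H_ge3 \<Delta>"
    and "formula_on d Fs Fn" and "consistent d Fs Fn"
  shows "(\<exists>!DF. admissible d Fs Fn \<Delta> DF
                \<and> (\<forall>G. admissible d Fs Fn \<Delta> G \<and> hyp_le G DF \<longrightarrow> G = DF))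
         \<and> (\<forall>DF. admissible d Fs Fn \<Delta> DF
                \<and> (\<forall>G. admissible d Fs Fn \<Delta> G \<and> hyp_le G DF \<longrightarrow> G = DF)
           \<longrightarrow> DF = Gamma_Fnsim d Fs Fn (Delta_Fsim d Fs \<Delta>))"
proof -
  let ?V = "fclasses d Fs"
  let ?\<Gamma> = "Delta_Fsim d Fs \<Delta>"
  note cv = covers_iff[OF assms(1)]
  have adm: "admissible d Fs Fn \<Delta> G \<longleftrightarrow> hypergraph_on ?V G \<and> hyp_le ?\<Gamma> G \<and> nsim_ok d Fs Fn G" for G
    unfolding admissible_def using cv(3) by blast
  obtain H where H: "hypergraph_on ?V H" "hyp_le ?\<Gamma> H" "nsim_ok d Fs Fn H"
    "\<forall>G. hyp_le ?\<Gamma> G \<and> nsim_ok d Fs Fn G \<longrightarrow> hyp_le H G"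
    using closure_exists[OF cv(1) cv(2)] by blast
  define P where "P DF \<longleftrightarrow> admissible d Fs Fn \<Delta> DF
                \<and> (\<forall>G. admissible d Fs Fn \<Delta> G \<and> hyp_le G DF \<longrightarrow> G = DF)" for DF
  have PH: "P H" unfolding P_def adm using H hyp_antisym by metis
  have Puniq: "DF = H" if "P DF" for DF
  proof -
    have "admissible d Fs Fn \<Delta> DF" using that unfolding P_def by blast
    hence "hyp_le H DF" using H(4) adm by blast
    moreover have "admissible d Fs Fn \<Delta> H" using H adm by blast
    ultimately show ?thesis using that unfolding P_def by metis
  qed
  have GH: "Gamma_Fnsim d Fs Fn ?\<Gamma> = H"
  proof -
    have eq: "Gamma_Fnsim d Fs Fn ?\<Gamma> = (THE G. P G)"
      unfolding Gamma_Fnsim_def P_def adm by (simp add: conj_assoc)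
    show ?thesis unfolding eq using PH Puniq by (rule the_equality)
  qed
  have A: "\<exists>!DF. P DF" using PH Puniq by blast
  have B: "\<forall>DF. P DF \<longrightarrow> DF = Gamma_Fnsim d Fs Fn ?\<Gamma>" using Puniq GH by blast
  show ?thesis using A B unfolding P_def by blast
qed

end
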